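(* Assume (A1), (A2), (A4), (A5), (A6) and (A7) of the context. Then for $1\le k,\ell\le d$, $$\frac1{\sqrt n}\sum_{i=1}^n\Big\{R_{b_n,k}(Y_i)R_{b_n,\ell}(Y_i)\frac{f(Y_i)}{f_{b_n}(Y_i)}-\mathbb{E}\Big[R_{b_n,k}(Y)R_{b_n,\ell}(Y)\frac{f(Y)}{f_{b_n}(Y)}\Big]\Big\}$$ $$=\frac1{\sqrt n}\sum_{i=1}^n\Big\{R_k(Y_i)R_\ell(Y_i)-\mathbb{E}\big[R_k(Y)R_\ell(Y)\big]\Big\}+o_p(1).$$
   Context: Setting. $X=(X_1,\dots,X_d)^T$ is an $\mathbb{R}^d$-valued random vector and $Y$ a real random variable with density $f>0$ on $\mathbb{R}$; each $(X_j,Y)$ has joint density $f_{(X_j,Y)}$; $g_j(y)=\int xf_{(X_j,Y)}(x,y)dx$, $R_j=g_j/f$; $f,g_j\in L^2(\mathbb{R})$. $\{(X^{(i)},Y_i)\}_{i=1}^n$ i.i.d. sample of $(X,Y)$. $\varphi$ father wavelet, $\psi$ associated mother wavelet forming (via $\varphi(\cdot-k)$, $2^{\ell/2}\psi(2^\ell\cdot-k)$) an orthonormal basis of $L^2(\mathbb{R})$; $K(x,y)=\sum_k\varphi(x-k)\varphi(y-k)$. $(j_n)$ increasing integers tending to $\infty$. $(b_n)$ positive, $b_n\to0$; $f_{b_n}=\max(f,b_n)$, $R_{b_n,j}=g_j/f_{b_n}$. $u_n\sim v_n$ means $u_n/v_n$ bounded away from $0$ and $\infty$ for large $n$. Assumptions.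 (A1) $\|X\|\le G$ for some $G>0$. (A2) $f,g_j$ three times differentiable; there exist a neighborhood $U$ of $0$ and $c>0$ with $|f^{(3)}(y+u)-f^{(3)}(y)|\le c|u|$, $|g_j^{(3)}(y+u)-g_j^{(3)}(y)|\le c|u|$ for all $y$, $u\in U$, $j$. (A4) $\varphi,\psi$ bounded, compactly supported. (A5) $|K(x,y)|\le\Phi(x-y)$, $\Phi\ge0$ bounded, compactly supported, symmetric, $\int u^2\Phi^2<\infty$, $\int|u|^k\Phi<\infty$ for $k\in\{0,1,4\}$; $\int K(x,y)(y-x)^kdy=0$ for all $x$, $k\in\{1,2,3\}$. (A6) $2^{-j_n}\sim n^{-c_1}$, $b_n\sim n^{-c_2}$, $0<c_2<1/10$, $1/8+c_2/4<c_1<1/4-c_2$. (A7) $\mathbb{E}[R_j^2(Y)]<\infty$ for all $j$, and $\sqrt n\,\mathbb{E}[|R_k(Y)R_\ell(Y)|\mathbf 1_{\{f(Y)\le a_n\}}]\to0$ for all $k,\ell$ and every positive $(a_n)$ with $a_n\sim b_n$. *)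

theory Defs
  imports "HOL-Probability.Probability"
begin

definition L2_fun :: "(real \<Rightarrow> real) \<Rightarrow> bool" where
  "L2_fun h \<longleftrightarrow> h \<in> borel_measurable lborel \<and> integrable lborel (\<lambda>x. (h x)\<^sup>2)"

definition wavelet_sys :: "(real \<Rightarrow> real) \<Rightarrow> (real \<Rightarrow> real) \<Rightarrow> int + (nat \<times> int) \<Rightarrow> real \<Rightarrow> real" where
  "wavelet_sys \<phi> \<psi> a x = (case a of
      Inl k \<Rightarrow> \<phi> (x - real_of_int k)
    | Inr (l, k) \<Rightarrow> 2 powr (real l / 2) * \<psi> (2 ^ l * x - real_of_int k))"

definition wavelet_ONB :: "(real \<Rightarrow> real) \<Rightarrow> (real \<Rightarrow> real) \<Rightarrow> bool" where
  "wavelet_ONB \<phi> \<psi> \<longleftrightarrow>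
     (\<forall>a. L2_fun (wavelet_sys \<phi> \<psi> a)) \<and>
     (\<forall>a b. (LINT x|lborel. wavelet_sys \<phi> \<psi> a x * wavelet_sys \<phi> \<psi> b x) = (if a = b then 1 else 0)) \<and>
     (\<forall>h. L2_fun h \<and> (\<forall>a. (LINT x|lborel. h x * wavelet_sys \<phi> \<psi> a x) = 0)
          \<longrightarrow> (AE x in lborel. h x = 0))"

definition wkernel :: "(real \<Rightarrow> real) \<Rightarrow> real \<Rightarrow> real \<Rightarrow> real" where
  "wkernel \<phi> x y = (\<Sum>\<^sub>\<infinity>k::int. \<phi> (x - real_of_int k) * \<phi> (y - real_of_int k))"

definition bounded_fun :: "(real \<Rightarrow> real) \<Rightarrow> bool" where
  "bounded_fun h \<longleftrightarrow> (\<exists>B. \<forall>x. \<bar>h x\<bar> \<le> B)"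

definition compact_supp :: "(real \<Rightarrow> real) \<Rightarrow> bool" where
  "compact_supp h \<longleftrightarrow> (\<exists>r. \<forall>x. r < \<bar>x\<bar> \<longrightarrow> h x = 0)"

definition seq_sim :: "(nat \<Rightarrow> real) \<Rightarrow> (nat \<Rightarrow> real) \<Rightarrow> bool" where
  "seq_sim u v \<longleftrightarrow> (\<exists>A B. 0 < A \<and> (\<forall>\<^sub>F n in sequentially. A \<le> u n / v n \<and> u n / v n \<le> B))"

text \<open>g_j(y) = \<integral> x f_(X_j,Y)(x,y) dx, with fj j the joint density of (X_j, Y).\<close>
definition gfun :: "('d \<Rightarrow> real \<Rightarrow> real \<Rightarrow> real) \<Rightarrow> 'd \<Rightarrow> real \<Rightarrow> real" where
  "gfun fj j y = (LINT x|lborel. x * fj j x y)"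

definition Rfun :: "(real \<Rightarrow> real) \<Rightarrow> ('d \<Rightarrow> real \<Rightarrow> real \<Rightarrow> real) \<Rightarrow> 'd \<Rightarrow> real \<Rightarrow> real" where
  "Rfun f fj j y = gfun fj j y / f y"

definition Rbfun :: "(real \<Rightarrow> real) \<Rightarrow> ('d \<Rightarrow> real \<Rightarrow> real \<Rightarrow> real) \<Rightarrow> real \<Rightarrow> 'd \<Rightarrow> real \<Rightarrow> real" where
  "Rbfun f fj b j y = gfun fj j y / max (f y) b"

definition op1 :: "'a measure \<Rightarrow> (nat \<Rightarrow> 'a \<Rightarrow> real) \<Rightarrow> bool" where
  "op1 M Z \<longleftrightarrow> (\<forall>\<epsilon>>0. (\<lambda>n. measure M {\<omega> \<in> space M. \<epsilon> < \<bar>Z n \<omega>\<bar>}) \<longlonglongrightarrow> 0)"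

end

theory Submission
  imports Defs
begin

theorem lemma10:
  fixes M :: "'a measure"
    and X :: "'a \<Rightarrow> real ^ 'd" and Y :: "'a \<Rightarrow> real"
    and Xs :: "nat \<Rightarrow> 'a \<Rightarrow> real ^ 'd" and Ys :: "nat \<Rightarrow> 'a \<Rightarrow> real"
    and f :: "real \<Rightarrow> real" and fj :: "'d \<Rightarrow> real \<Rightarrow> real \<Rightarrow> real"
    and \<phi> \<psi> \<Phi> :: "real \<Rightarrow> real"
    and jn :: "nat \<Rightarrow> int" and b :: "nat \<Rightarrow> real"
    and G c1 c2 :: real
    and k l :: 'd
  assumes P: "prob_space M"
    and X_meas: "X \<in> borel_measurable M" and Y_meas: "Y \<in> borel_measurable M"
    and Y_dens: "distributed M lborel Y (\<lambda>y. ennreal (f y))"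
    and f_pos: "\<forall>y. 0 < f y"
    and fj_nonneg: "\<forall>j x y. 0 \<le> fj j x y"
    and XY_dens: "\<forall>j. distributed M (lborel \<Otimes>\<^sub>M lborel) (\<lambda>\<omega>. (X \<omega> $ j, Y \<omega>))
                          (\<lambda>(x, y). ennreal (fj j x y))"
    and f_L2: "L2_fun f" and g_L2: "\<forall>j. L2_fun (gfun fj j)"
    and sample_meas: "\<forall>i. Xs i \<in> borel_measurable M \<and> Ys i \<in> borel_measurable M"
    and sample_indep: "prob_space.indep_vars M (\<lambda>_. borel) (\<lambda>i \<omega>. (Xs i \<omega>, Ys i \<omega>)) UNIV"
    and sample_id: "\<forall>i. distr M borel (\<lambda>\<omega>. (Xs i \<omega>, Ys i \<omega>)) = distr M borel (\<lambda>\<omega>. (X \<omega>, Y \<omega>))"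
    \<comment> \<open>(A1)\<close>
    and A1: "0 < G" "AE \<omega> in M. norm (X \<omega>) \<le> G"
    \<comment> \<open>(A2)\<close>
    and A2_f: "\<forall>m<3. \<forall>y. (deriv ^^ m) f differentiable (at y)"
    and A2_g: "\<forall>j. \<forall>m<3. \<forall>y. (deriv ^^ m) (gfun fj j) differentiable (at y)"
    and A2_lip: "\<exists>U c. open U \<and> 0 \<in> U \<and> 0 < c \<and>
        (\<forall>y u. u \<in> U \<longrightarrow>
           \<bar>(deriv ^^ 3) f (y + u) - (deriv ^^ 3) f y\<bar> \<le> c * \<bar>u\<bar> \<and>
           (\<forall>j. \<bar>(deriv ^^ 3) (gfun fj j) (y + u) - (deriv ^^ 3) (gfun fj j) y\<bar> \<le> c * \<bar>u\<bar>))"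
    \<comment> \<open>wavelets\<close>
    and wav: "wavelet_ONB \<phi> \<psi>"
    \<comment> \<open>(A4)\<close>
    and A4: "bounded_fun \<phi>" "compact_supp \<phi>" "bounded_fun \<psi>" "compact_supp \<psi>"
    \<comment> \<open>(A5)\<close>
    and A5_K: "\<forall>x y. \<bar>wkernel \<phi> x y\<bar> \<le> \<Phi> (x - y)"
    and A5_Phi: "\<forall>u. 0 \<le> \<Phi> u" "bounded_fun \<Phi>" "compact_supp \<Phi>" "\<forall>u. \<Phi> (- u) = \<Phi> u"
    and A5_int: "integrable lborel (\<lambda>u. u\<^sup>2 * (\<Phi> u)\<^sup>2)"
        "\<forall>m\<in>{0, 1, 4}. integrable lborel (\<lambda>u. \<bar>u\<bar> ^ m * \<Phi> u)"
    and A5_mom: "\<forall>x. \<forall>m\<in>{1, 2, 3}. (LINT y|lborel. wkernel \<phi> x y * (y - x) ^ m) = 0"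
    \<comment> \<open>(j_n), (b_n)\<close>
    and jn_mono: "mono jn" and jn_lim: "filterlim jn at_top sequentially"
    and b_pos: "\<forall>n. 0 < b n" and b_lim: "b \<longlonglongrightarrow> 0"
    \<comment> \<open>(A6)\<close>
    and A6: "seq_sim (\<lambda>n. 2 powr (- real_of_int (jn n))) (\<lambda>n. real n powr (- c1))"
        "seq_sim b (\<lambda>n. real n powr (- c2))"
        "0 < c2" "c2 < 1/10" "1/8 + c2/4 < c1" "c1 < 1/4 - c2"
    \<comment> \<open>(A7)\<close>
    and A7_sq: "\<forall>j. integrable M (\<lambda>\<omega>. (Rfun f fj j (Y \<omega>))\<^sup>2)"
    and A7_tail: "\<forall>k' l' a. (\<forall>n. 0 < a n) \<and> seq_sim a b \<longrightarrow>
        (\<lambda>n. sqrt (real n) *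
           (LINT \<omega>|M. \<bar>Rfun f fj k' (Y \<omega>) * Rfun f fj l' (Y \<omega>)\<bar>
                       * indicator {\<omega>. f (Y \<omega>) \<le> a n} \<omega>)) \<longlonglongrightarrow> 0"
  shows "op1 M (\<lambda>n \<omega>.
     (1 / sqrt (real n)) * (\<Sum>i<n.
        Rbfun f fj (b n) k (Ys i \<omega>) * Rbfun f fj (b n) l (Ys i \<omega>) * f (Ys i \<omega>) / max (f (Ys i \<omega>)) (b n)
        - (LINT \<omega>'|M. Rbfun f fj (b n) k (Y \<omega>') * Rbfun f fj (b n) l (Y \<omega>') * f (Y \<omega>') / max (f (Y \<omega>')) (b n)))
   - (1 / sqrt (real n)) * (\<Sum>i<n.
        Rfun f fj k (Ys i \<omega>) * Rfun f fj l (Ys i \<omega>)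
        - (LINT \<omega>'|M. Rfun f fj k (Y \<omega>') * Rfun f fj l (Y \<omega>'))))"
proof -
  interpret prob_space M using P .
  have fm[measurable]: "f \<in> borel_measurable borel" using f_L2 unfolding L2_fun_def by simp
  have gm[measurable]: "\<And>j. gfun fj j \<in> borel_measurable borel" using g_L2 unfolding L2_fun_def by simp
  have Ysm[measurable]: "\<And>i. Ys i \<in> borel_measurable M" using sample_meas by simp
  have Xsm[measurable]: "\<And>i. Xs i \<in> borel_measurable M" using sample_meas by simp
  note Y_meas[measurable] X_meas[measurable]
  define A where "A n y = Rbfun f fj (b n) k y * Rbfun f fj (b n) l y * f y / max (f y) (b n)" for n y
  define B where "B y = Rfun f fj k y * Rfun f fj l y" for y
  define h where "h n y = \<bar>B y\<bar> * indicator {y. f y \<le> b n} y" for n y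
  define e where "e n = (LINT \<omega>|M. h n (Y \<omega>))" for n
  have Am[measurable]: "\<And>n. A n \<in> borel_measurable borel" unfolding A_def Rbfun_def by measurable
  have Bm[measurable]: "B \<in> borel_measurable borel" unfolding B_def Rfun_def by measurable
  have hm[measurable]: "\<And>n. h n \<in> borel_measurable borel" unfolding h_def by measurable
  have distY: "\<And>i. distr M borel (Ys i) = distr M borel Y"
  proof -
    fix i
    have "distr M borel (Ys i) = distr (distr M borel (\<lambda>\<omega>. (Xs i \<omega>, Ys i \<omega>))) borel snd"
      by (subst distr_distr) (auto simp: comp_def intro!: borel_measurable_continuous_onI continuous_intros)
    also have "\<dots> = distr (distr M borel (\<lambda>\<omega>. (X \<omega>, Y \<omega>))) borel snd" using sample_id by simp
    also have "\<dots> = distr M borel Y"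
      by (subst distr_distr) (auto simp: comp_def intro!: borel_measurable_continuous_onI continuous_intros)
    finally show "distr M borel (Ys i) = distr M borel Y" .
  qed
  have Bint: "integrable M (\<lambda>\<omega>. B (Y \<omega>))"
  proof (rule Bochner_Integration.integrable_bound)
    show "integrable M (\<lambda>\<omega>. (Rfun f fj k (Y \<omega>))\<^sup>2 + (Rfun f fj l (Y \<omega>))\<^sup>2)"
      using A7_sq by auto
    show "(\<lambda>\<omega>. B (Y \<omega>)) \<in> borel_measurable M" by measurable
    show "AE x in M. norm (B (Y x)) \<le> norm ((Rfun f fj k (Y x))\<^sup>2 + (Rfun f fj l (Y x))\<^sup>2)"
    proof (rule AE_I2)
      fix x
      have "\<bar>2 * (Rfun f fj k (Y x) * Rfun f fj l (Y x))\<bar> \<le> (Rfun f fj k (Y x))\<^sup>2 + (Rfun f fj l (Y x))\<^sup>2"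
        using sum_squares_bound[of "Rfun f fj k (Y x)" "Rfun f fj l (Y x)"]
          sum_squares_bound[of "Rfun f fj k (Y x)" "- Rfun f fj l (Y x)"]
        by (auto simp: abs_le_iff)
      then show "norm (B (Y x)) \<le> norm ((Rfun f fj k (Y x))\<^sup>2 + (Rfun f fj l (Y x))\<^sup>2)"
        unfolding B_def by auto
    qed
  qed
  have hint: "\<And>n. integrable M (\<lambda>\<omega>. h n (Y \<omega>))"
    by (rule Bochner_Integration.integrable_bound[OF Bint]) (auto simp: h_def indicator_def)
  have pw: "\<bar>A n y - B y\<bar> \<le> h n y" for n y
  proof (cases "b n \<le> f y")
    case True
    then have "max (f y) (b n) = f y" by simp
    with f_pos have "A n y = B y" unfolding A_def B_def Rbfun_def Rfun_def by simp
    then show ?thesis by (simp add: h_def)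
  next
    case False
    then have mx: "max (f y) (b n) = b n" by simp
    have fy: "0 < f y" using f_pos by auto
    define t where "t = (f y / b n) ^ 3"
    have t0: "0 \<le> t" "t \<le> 1" using False fy unfolding t_def
      by (auto intro!: power_le_one)
    have "A n y = B y * t" unfolding A_def B_def Rbfun_def Rfun_def mx t_def using fy False
      by (simp add: field_simps power3_eq_cube power2_eq_square)
    then have "\<bar>A n y - B y\<bar> = \<bar>B y\<bar> * (1 - t)"
    proof -
      assume "A n y = B y * t"
      then have "A n y - B y = - (B y * (1 - t))" by (simp add: algebra_simps)
      then show ?thesis using t0 by (simp only: abs_minus_cancel abs_mult)
    qed
    also have "\<dots> \<le> \<bar>B y\<bar>" using t0 by (simp add: mult_left_le)
    finally show ?thesis using False by (simp add: h_def)
  qed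
  have Aint: "\<And>n. integrable M (\<lambda>\<omega>. A n (Y \<omega>))"
  proof -
    fix n
    have "integrable M (\<lambda>\<omega>. A n (Y \<omega>) - B (Y \<omega>))"
      by (rule Bochner_Integration.integrable_bound[OF hint[of n]]) (use pw in \<open>auto intro!: AE_I2 order.trans[OF _ abs_ge_self]\<close>)
    from Bochner_Integration.integrable_add[OF this Bint] show "integrable M (\<lambda>\<omega>. A n (Y \<omega>))" by simp
  qed
  define c where "c n = (LINT \<omega>|M. A n (Y \<omega>)) - (LINT \<omega>|M. B (Y \<omega>))" for n
  have ce: "\<bar>c n\<bar> \<le> e n" for n
  proof -
    have "c n = (LINT \<omega>|M. A n (Y \<omega>) - B (Y \<omega>))"
      unfolding c_def using Aint Bint by simp
    also have "\<bar>\<dots>\<bar> \<le> (LINT \<omega>|M. \<bar>A n (Y \<omega>) - B (Y \<omega>)\<bar>)" by (rule integral_abs_bound)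
    also have "\<dots> \<le> e n" unfolding e_def
      using pw Aint Bint hint by (intro integral_mono) auto
    finally show ?thesis .
  qed
  have hYs: "\<And>n i. integrable M (\<lambda>\<omega>. h n (Ys i \<omega>)) \<and> (LINT \<omega>|M. h n (Ys i \<omega>)) = e n"
  proof -
    fix n i
    have "integrable M (\<lambda>\<omega>. h n (Ys i \<omega>)) = integrable (distr M borel (Ys i)) (h n)"
      by (simp add: integrable_distr_eq)
    also have "\<dots> = integrable (distr M borel Y) (h n)" by (simp add: distY)
    also have "\<dots> = integrable M (\<lambda>\<omega>. h n (Y \<omega>))" by (simp add: integrable_distr_eq)
    finally have 1: "integrable M (\<lambda>\<omega>. h n (Ys i \<omega>))" using hint by simp
    have "(LINT \<omega>|M. h n (Ys i \<omega>)) = integral\<^sup>L (distr M borel (Ys i)) (h n)"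
      by (simp add: integral_distr)
    also have "\<dots> = integral\<^sup>L (distr M borel Y) (h n)" by (simp add: distY)
    also have "\<dots> = e n" unfolding e_def by (simp add: integral_distr)
    finally show "?thesis n i" using 1 by simp
  qed
  define D where "D = (\<lambda>n \<omega>.
     (1 / sqrt (real n)) * (\<Sum>i<n.
        Rbfun f fj (b n) k (Ys i \<omega>) * Rbfun f fj (b n) l (Ys i \<omega>) * f (Ys i \<omega>) / max (f (Ys i \<omega>)) (b n)
        - (LINT \<omega>'|M. Rbfun f fj (b n) k (Y \<omega>') * Rbfun f fj (b n) l (Y \<omega>') * f (Y \<omega>') / max (f (Y \<omega>')) (b n)))
   - (1 / sqrt (real n)) * (\<Sum>i<n.
        Rfun f fj k (Ys i \<omega>) * Rfun f fj l (Ys i \<omega>)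
        - (LINT \<omega>'|M. Rfun f fj k (Y \<omega>') * Rfun f fj l (Y \<omega>'))))"
  define U where "U n \<omega> = (1 / sqrt (real n)) * (\<Sum>i<n. h n (Ys i \<omega>) + e n)" for n \<omega>
  have DU: "\<bar>D n \<omega>\<bar> \<le> U n \<omega>" for n \<omega>
  proof -
    have "D n \<omega> = (1 / sqrt (real n)) * (\<Sum>i<n. (A n (Ys i \<omega>) - B (Ys i \<omega>)) - c n)"
    proof -
      have "(\<Sum>i<n. A n (Ys i \<omega>) - (LINT \<omega>'|M. A n (Y \<omega>'))) - (\<Sum>i<n. B (Ys i \<omega>) - (LINT \<omega>'|M. B (Y \<omega>')))
          = (\<Sum>i<n. (A n (Ys i \<omega>) - B (Ys i \<omega>)) - c n)"
        unfolding c_def sum_subtractf[symmetric] by (intro sum.cong) auto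
      then show ?thesis
        unfolding D_def A_def[symmetric] B_def[symmetric]
        by (simp add: diff_divide_distrib[symmetric])
    qed
    also have "\<bar>\<dots>\<bar> \<le> (1 / sqrt (real n)) * (\<Sum>i<n. \<bar>(A n (Ys i \<omega>) - B (Ys i \<omega>)) - c n\<bar>)"
      by (simp add: abs_mult) (rule divide_right_mono[OF sum_abs], simp)
    also have "\<dots> \<le> U n \<omega>" unfolding U_def
      by (intro mult_left_mono sum_mono order.trans[OF abs_triangle_ineq4] add_mono pw ce) auto
    finally show ?thesis .
  qed
  have Uint: "integrable M (U n)" for n
    unfolding U_def using hYs by auto
  have EU: "(LINT \<omega>|M. U n \<omega>) = 2 * (sqrt (real n) * e n)" for n
  proof -
    have "(LINT \<omega>|M. U n \<omega>) = (1 / sqrt (real n)) * (\<Sum>i<n. (LINT \<omega>|M. h n (Ys i \<omega>)) + e n)"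
      unfolding U_def using hYs by (simp add: Bochner_Integration.integral_sum prob_space)
    also have "\<dots> = (1 / sqrt (real n)) * (2 * real n * e n)" using hYs by simp
    also have "\<dots> = 2 * (sqrt (real n) * e n)"
      by (cases "n = 0") (auto simp: field_simps)
    finally show ?thesis .
  qed
  have lim: "(\<lambda>n. sqrt (real n) * e n) \<longlonglongrightarrow> 0"
  proof -
    have sb: "seq_sim b b" unfolding seq_sim_def using b_pos
      by (intro exI[of _ 1]) (auto simp: less_imp_neq[symmetric])
    have "(\<lambda>n. sqrt (real n) *
           (LINT \<omega>|M. \<bar>Rfun f fj k (Y \<omega>) * Rfun f fj l (Y \<omega>)\<bar>
                       * indicator {\<omega>. f (Y \<omega>) \<le> b n} \<omega>)) \<longlonglongrightarrow> 0"
      using A7_tail sb b_pos by blast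
    moreover have "\<And>n. (LINT \<omega>|M. \<bar>Rfun f fj k (Y \<omega>) * Rfun f fj l (Y \<omega>)\<bar>
                       * indicator {\<omega>. f (Y \<omega>) \<le> b n} \<omega>) = e n"
      unfolding e_def h_def B_def by (simp add: indicator_def)
    ultimately show ?thesis by simp
  qed
  show ?thesis
    unfolding op1_def D_def[symmetric]
  proof (intro allI impI)
    fix \<epsilon> :: real assume ep: "0 < \<epsilon>"
    have le: "measure M {\<omega> \<in> space M. \<epsilon> < \<bar>D n \<omega>\<bar>} \<le> 2 * (sqrt (real n) * e n) / \<epsilon>" for n
    proof -
      have "measure M {\<omega> \<in> space M. \<epsilon> < \<bar>D n \<omega>\<bar>} \<le> measure M {\<omega> \<in> space M. U n \<omega> \<ge> \<epsilon>}"
      proof (rule finite_measure_mono)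
        show "{\<omega> \<in> space M. \<epsilon> < \<bar>D n \<omega>\<bar>} \<subseteq> {\<omega> \<in> space M. U n \<omega> \<ge> \<epsilon>}"
          by (auto intro: order.trans[OF less_imp_le DU])
        have [measurable]: "U n \<in> borel_measurable M" using Uint by (rule borel_measurable_integrable)
        show "{\<omega> \<in> space M. U n \<omega> \<ge> \<epsilon>} \<in> sets M" by measurable
      qed
      also have "\<dots> \<le> (LINT \<omega>|M. U n \<omega>) / \<epsilon>"
        by (rule integral_Markov_inequality_measure[OF Uint _ _ ep, of "space M"])
           (auto intro!: AE_I2 order.trans[OF abs_ge_zero DU])
      finally show ?thesis using EU by simp
    qed
    have "(\<lambda>n. 2 * (sqrt (real n) * e n) / \<epsilon>) \<longlonglongrightarrow> 2 * 0 / \<epsilon>"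
      by (intro tendsto_divide tendsto_mult tendsto_const lim) (use ep in simp)
    then have T: "(\<lambda>n. 2 * (sqrt (real n) * e n) / \<epsilon>) \<longlonglongrightarrow> 0" by simp
    show "(\<lambda>n. measure M {\<omega> \<in> space M. \<epsilon> < \<bar>D n \<omega>\<bar>}) \<longlonglongrightarrow> 0"
    proof (rule real_tendsto_sandwich[OF _ _ tendsto_const T])
      show "\<forall>\<^sub>F n in sequentially. 0 \<le> measure M {\<omega> \<in> space M. \<epsilon> < \<bar>D n \<omega>\<bar>}"
        by (rule always_eventually) (simp add: measure_nonneg)
      show "\<forall>\<^sub>F n in sequentially. measure M {\<omega> \<in> space M. \<epsilon> < \<bar>D n \<omega>\<bar>} \<le> 2 * (sqrt (real n) * e n) / \<epsilon>"
        by (rule always_eventually) (rule allI, rule le)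
    qed
  qed
qed

end
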